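(* Let $G$ be a finite, simple, connected, undirected graph of order $n\ge 2$ and let $A\subseteq V(G)$ be nonempty. Then $P_A(G)=1$ if and only if $A$ is a (classical) zero forcing set of $G$.
   Context: Classical zero forcing: given a set of black vertices (the rest white), the color change rule turns a white vertex $v$ black if $v$ is the only white neighbor of some black vertex $u$. A set $S$ is a zero forcing set if starting with $S$ black, finitely many applications of this rule make all of $V(G)$ black. Probabilistic process: for a vertex $u$, $N(u)$ is its open neighborhood, $N[u]=N(u)\cup\{u\}$, $\deg(u)=|N(u)|$. Given a current black set $Z$, $F(u\to v)=0$ if $u\notin Z$, or $v\notin N(u)$, or $N[u]\subseteq Z$; otherwise $F(u\to v)=|N[u]\cap Z|/\deg(u)$. One global application of the probabilistic color change rule: black vertices stay black; independently for every pair $(u,v)$ with $u$ black and $v\in N(u)$ white, $u$ forces $v$ with probability $F(u\to v)$; a white vertex becomes black iff some black neighbor forces it. Starting with black set $A$ at step $0$ and applying this rule repeatedly, let $S^k$ be the set of colorings reachable with positive probability after exactly $k$ steps and $P^{(k)}$ the probability distribution on them. Let $T^k\subseteq S^k$ be the colorings whose black set contains a classical zero forcing set of $G$. Define $P_A(G)=P^{(k_0)}(T^{k_0})$ where $k_0$ is the least $k\ge 0$ with $T^k\neq\emptyset$. *)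

theory Defs
  imports "HOL-Probability.Probability"
begin

definition simple_graph :: "'a set \<Rightarrow> ('a \<Rightarrow> 'a \<Rightarrow> bool) \<Rightarrow> bool" where
  "simple_graph V E \<longleftrightarrow> finite V \<and> (\<forall>u v. E u v \<longrightarrow> u \<in> V \<and> v \<in> V)
     \<and> (\<forall>u v. E u v \<longrightarrow> E v u) \<and> (\<forall>u. \<not> E u u)"

definition connected_graph :: "'a set \<Rightarrow> ('a \<Rightarrow> 'a \<Rightarrow> bool) \<Rightarrow> bool" where
  "connected_graph V E \<longleftrightarrow> (\<forall>u\<in>V. \<forall>v\<in>V. E\<^sup>*\<^sup>* u v)"

definition nbhd :: "'a set \<Rightarrow> ('a \<Rightarrow> 'a \<Rightarrow> bool) \<Rightarrow> 'a \<Rightarrow> 'a set" where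
  "nbhd V E u = {v \<in> V. E u v}"

definition cnbhd :: "'a set \<Rightarrow> ('a \<Rightarrow> 'a \<Rightarrow> bool) \<Rightarrow> 'a \<Rightarrow> 'a set" where
  "cnbhd V E u = insert u (nbhd V E u)"

definition deg :: "'a set \<Rightarrow> ('a \<Rightarrow> 'a \<Rightarrow> bool) \<Rightarrow> 'a \<Rightarrow> nat" where
  "deg V E u = card (nbhd V E u)"

inductive zf_reach :: "'a set \<Rightarrow> ('a \<Rightarrow> 'a \<Rightarrow> bool) \<Rightarrow> 'a set \<Rightarrow> 'a set \<Rightarrow> bool"
  for V E S where
  zf_base: "zf_reach V E S S"
| zf_step: "zf_reach V E S B \<Longrightarrow> u \<in> B \<Longrightarrow> v \<in> nbhd V E u \<Longrightarrow> v \<notin> B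
     \<Longrightarrow> nbhd V E u - B = {v} \<Longrightarrow> zf_reach V E S (insert v B)"

definition zero_forcing_set :: "'a set \<Rightarrow> ('a \<Rightarrow> 'a \<Rightarrow> bool) \<Rightarrow> 'a set \<Rightarrow> bool" where
  "zero_forcing_set V E S \<longleftrightarrow> S \<subseteq> V \<and> zf_reach V E S V"

definition force_prob :: "'a set \<Rightarrow> ('a \<Rightarrow> 'a \<Rightarrow> bool) \<Rightarrow> 'a set \<Rightarrow> 'a \<Rightarrow> 'a \<Rightarrow> real" where
  "force_prob V E Z u v =
     (if u \<notin> Z \<or> v \<notin> nbhd V E u \<or> cnbhd V E u \<subseteq> Z then 0
      else real (card (cnbhd V E u \<inter> Z)) / real (deg V E u))"

definition force_pairs :: "'a set \<Rightarrow> ('a \<Rightarrow> 'a \<Rightarrow> bool) \<Rightarrow> 'a set \<Rightarrow> ('a \<times> 'a) set" where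
  "force_pairs V E Z = {(u, v). u \<in> Z \<and> v \<in> nbhd V E u \<and> v \<notin> Z}"

text \<open>One global application: independently for every pair (u,v), u black, v a white
  neighbour, u forces v with probability F(u->v); v becomes black iff some u forces it.\<close>

definition prob_step :: "'a set \<Rightarrow> ('a \<Rightarrow> 'a \<Rightarrow> bool) \<Rightarrow> 'a set \<Rightarrow> 'a set pmf" where
  "prob_step V E Z =
     map_pmf (\<lambda>\<omega>. Z \<union> {v. \<exists>u. (u, v) \<in> force_pairs V E Z \<and> \<omega> (u, v)})
       (Pi_pmf (force_pairs V E Z) False
          (\<lambda>(u, v). bernoulli_pmf (force_prob V E Z u v)))"

definition prob_dist :: "'a set \<Rightarrow> ('a \<Rightarrow> 'a \<Rightarrow> bool) \<Rightarrow> 'a set \<Rightarrow> nat \<Rightarrow> 'a set pmf" where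
  "prob_dist V E A k = ((\<lambda>D. bind_pmf D (prob_step V E)) ^^ k) (return_pmf A)"

definition T_set :: "'a set \<Rightarrow> ('a \<Rightarrow> 'a \<Rightarrow> bool) \<Rightarrow> 'a set \<Rightarrow> nat \<Rightarrow> 'a set set" where
  "T_set V E A k = {Z \<in> set_pmf (prob_dist V E A k). \<exists>S \<subseteq> Z. zero_forcing_set V E S}"

definition P_A :: "'a set \<Rightarrow> ('a \<Rightarrow> 'a \<Rightarrow> bool) \<Rightarrow> 'a set \<Rightarrow> real" where
  "P_A V E A = (let k0 = (LEAST k. T_set V E A k \<noteq> {})
                in measure_pmf.prob (prob_dist V E A k0) (T_set V E A k0))"

end

theory Submission
  imports Defs
begin

lemma zf_mono:
  assumes "zf_reach V E S B" "S \<subseteq> C"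
  shows "zf_reach V E C (B \<union> C)"
  using assms
proof induction
  case zf_base
  then show ?case by (simp add: Un_absorb1 zf_reach.zf_base)
next
  case (zf_step B u v)
  show ?case
  proof (cases "v \<in> C")
    case True
    then have "insert v B \<union> C = B \<union> C" by auto
    then show ?thesis using zf_step by simp
  next
    case False
    have "nbhd V E u - (B \<union> C) = {v}" using zf_step False by auto
    then have "zf_reach V E C (insert v (B \<union> C))"
      using zf_step False by (intro zf_reach.zf_step) auto
    then show ?thesis by simp
  qed
qed

lemma zf_trans:
  assumes "zf_reach V E B C" "zf_reach V E S B"
  shows "zf_reach V E S C"
  using assms
proof induction
  case zf_base then show ?case .
next
  case (zf_step B' u v)
  then show ?case by (intro zf_reach.zf_step) auto
qed

lemma zf_superset:
  assumes "zero_forcing_set V E S" "S \<subseteq> C" "C \<subseteq> V"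
  shows "zero_forcing_set V E C"
proof -
  have "zf_reach V E C (V \<union> C)" using assms zf_mono unfolding zero_forcing_set_def by blast
  moreover have "V \<union> C = V" using assms by auto
  ultimately show ?thesis using assms unfolding zero_forcing_set_def by simp
qed

lemma bern_True: "p \<ge> 1 \<Longrightarrow> True \<in> set_pmf (bernoulli_pmf p)"
  by (simp add: set_pmf_iff bernoulli_pmf.rep_eq)

lemma bern_False: "p < 1 \<Longrightarrow> False \<in> set_pmf (bernoulli_pmf p)"
  by (simp add: set_pmf_iff bernoulli_pmf.rep_eq)


lemma step_subset:
  assumes "Z' \<in> set_pmf (prob_step V E W)" "W \<subseteq> V"
  shows "Z' \<subseteq> V"
  using assms unfolding prob_step_def force_pairs_def nbhd_def by auto

lemma force_one:
  assumes irr: "\<And>u. \<not> E u u" and fin: "finite V"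
    and p: "(u, v) \<in> force_pairs V E W" and ge: "force_prob V E W u v \<ge> 1"
  shows "nbhd V E u - W = {v}"
proof -
  have uW: "u \<in> W" and vN: "v \<in> nbhd V E u" and vW: "v \<notin> W"
    using p unfolding force_pairs_def by auto
  have finN: "finite (nbhd V E u)" using fin unfolding nbhd_def by auto
  have uN: "u \<notin> nbhd V E u" using irr unfolding nbhd_def by auto
  have nsub: "\<not> cnbhd V E u \<subseteq> W" using vN vW unfolding cnbhd_def by auto
  have eq: "cnbhd V E u \<inter> W = insert u (nbhd V E u \<inter> W)" using uW unfolding cnbhd_def by auto
  have c1: "card (cnbhd V E u \<inter> W) = Suc (card (nbhd V E u \<inter> W))"
    unfolding eq using uN finN by (simp add: card_insert_if)
  have dpos: "deg V E u > 0" unfolding deg_def using vN finN card_gt_0_iff by blast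
  have "real (card (cnbhd V E u \<inter> W)) / real (deg V E u) \<ge> 1"
    using ge uW vN nsub unfolding force_prob_def by (auto split: if_splits)
  then have "real (card (cnbhd V E u \<inter> W)) \<ge> real (deg V E u)"
    using dpos by (simp add: divide_simps split: if_splits)
  then have le: "card (nbhd V E u) \<le> Suc (card (nbhd V E u \<inter> W))"
    using c1 unfolding deg_def by linarith
  have "card (nbhd V E u - W) = card (nbhd V E u) - card (nbhd V E u \<inter> W)"
    using finN by (metis card_Diff_subset_Int finite_Int)
  then have "card (nbhd V E u - W) \<le> 1" using le by linarith
  moreover have "v \<in> nbhd V E u - W" using vN vW by auto
  moreover have "finite (nbhd V E u - W)" using finN by auto
  ultimately show ?thesis
    using card_le_Suc0_iff_eq[of "nbhd V E u - W"] by auto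
qed

lemma bern_ge: "(p \<ge> 1) \<in> set_pmf (bernoulli_pmf p)"
  by (cases "p \<ge> 1") (auto simp: bern_True bern_False)

lemma fp_finite:
  assumes "finite V" "W \<subseteq> V"
  shows "finite (force_pairs V E W)"
proof (rule finite_subset)
  show "force_pairs V E W \<subseteq> V \<times> V" using assms(2) unfolding force_pairs_def nbhd_def by auto
  show "finite (V \<times> V)" using assms(1) by simp
qed

lemma step_exists:
  assumes irr: "\<And>u. \<not> E u u" and fin: "finite V" and WV: "W \<subseteq> V"
  shows "\<exists>W'. W' \<in> set_pmf (prob_step V E W) \<and> zf_reach V E W W'"
proof -
  define I where "I = force_pairs V E W"
  define \<omega> where "\<omega> = (\<lambda>x. x \<in> I \<and> force_prob V E W (fst x) (snd x) \<ge> 1)"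
  have finI: "finite I" unfolding I_def using fp_finite fin WV by blast
  have "\<omega> \<in> set_pmf (Pi_pmf I False (\<lambda>(u, v). bernoulli_pmf (force_prob V E W u v)))"
    unfolding set_Pi_pmf[OF finI] PiE_dflt_def
    using bern_ge by (auto simp: \<omega>_def)
  then have mem: "W \<union> {v. \<exists>u. (u, v) \<in> I \<and> \<omega> (u, v)} \<in> set_pmf (prob_step V E W)"
    unfolding prob_step_def I_def by auto
  define F where "F = {v. \<exists>u. (u, v) \<in> I \<and> \<omega> (u, v)}"
  have Fprop: "\<And>v. v \<in> F \<Longrightarrow> \<exists>u\<in>W. v \<in> nbhd V E u \<and> v \<notin> W \<and> nbhd V E u - W = {v}"
  proof -
    fix v assume "v \<in> F"
    then obtain u where p: "(u, v) \<in> I" and ge: "force_prob V E W u v \<ge> 1"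
      unfolding F_def \<omega>_def by auto
    have "nbhd V E u - W = {v}" using force_one[of E, OF irr fin] p ge unfolding I_def by blast
    then show "\<exists>u\<in>W. v \<in> nbhd V E u \<and> v \<notin> W \<and> nbhd V E u - W = {v}"
      using p unfolding I_def force_pairs_def by auto
  qed
  have finF: "finite F" unfolding F_def using finI
    by (rule_tac finite_subset[of _ "snd ` I"]) force+
  have "\<And>F'. finite F' \<Longrightarrow> F' \<subseteq> F \<Longrightarrow> zf_reach V E W (W \<union> F')"
  proof -
    fix F' :: "'a set"
    assume "finite F'" "F' \<subseteq> F"
    then show "zf_reach V E W (W \<union> F')"
    proof (induction F' rule: finite_induct)
      case empty then show ?case by (simp add: zf_reach.zf_base)
    next
      case (insert x F')
      then have IH: "zf_reach V E W (W \<union> F')" by auto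
      show ?case
      proof (cases "x \<in> W \<union> F'")
        case True
        then have "W \<union> insert x F' = W \<union> F'" by auto
        then show ?thesis using IH by simp
      next
        case False
        obtain u where u: "u \<in> W" "x \<in> nbhd V E u" "nbhd V E u - W = {x}"
          using Fprop insert by blast
        have "nbhd V E u - (W \<union> F') = {x}" using u False by auto
        then have "zf_reach V E W (insert x (W \<union> F'))"
          using IH u False by (intro zf_reach.zf_step) auto
        then show ?thesis by simp
      qed
    qed
  qed
  then have "zf_reach V E W (W \<union> F)" using finF by blast
  then show ?thesis using mem unfolding F_def by blast
qed

lemma dist_Suc: "set_pmf (prob_dist V E A (Suc k)) = (\<Union>W\<in>set_pmf (prob_dist V E A k). set_pmf (prob_step V E W))"
  unfolding prob_dist_def by simp

lemma dist_subset:
  assumes "A \<subseteq> V"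
  shows "Z \<in> set_pmf (prob_dist V E A k) \<Longrightarrow> Z \<subseteq> V"
proof (induction k arbitrary: Z)
  case 0 then show ?case using assms by (simp add: prob_dist_def)
next
  case (Suc k) then show ?case using step_subset unfolding dist_Suc by blast
qed

theorem mainTheorem2:
  fixes V :: "'a set" and E :: "'a \<Rightarrow> 'a \<Rightarrow> bool" and A :: "'a set"
  assumes "simple_graph V E"
    and "connected_graph V E"
    and "card V \<ge> 2"
    and "A \<subseteq> V" and "A \<noteq> {}"
  shows "P_A V E A = 1 \<longleftrightarrow> zero_forcing_set V E A"
proof -
  have fin: "finite V" and irr: "\<And>u. \<not> E u u" using assms(1) unfolding simple_graph_def by auto
  have T0: "T_set V E A 0 = (if zero_forcing_set V E A then {A} else {})"
    unfolding T_set_def prob_dist_def using zf_superset assms(4) by auto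
  show ?thesis
  proof
    assume zf: "zero_forcing_set V E A"
    then have "T_set V E A 0 \<noteq> {}" using T0 by simp
    then have "(LEAST k. T_set V E A k \<noteq> {}) = 0" by (simp add: Least_eq_0)
    then show "P_A V E A = 1" unfolding P_A_def Let_def using T0 zf
      by (simp add: prob_dist_def)
  next
    assume P1: "P_A V E A = 1"
    show "zero_forcing_set V E A"
    proof (rule ccontr)
      assume nzf: "\<not> zero_forcing_set V E A"
      define k0 where "k0 = (LEAST k. T_set V E A k \<noteq> {})"
      have Pk: "measure_pmf.prob (prob_dist V E A k0) (T_set V E A k0) = 1"
        using P1 unfolding P_A_def Let_def k0_def by simp
      show False
      proof (cases "\<exists>k. T_set V E A k \<noteq> {}")
        case False
        then have "T_set V E A k0 = {}" by auto
        then show False using Pk by simp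
      next
        case True
        then have ne: "T_set V E A k0 \<noteq> {}" unfolding k0_def by (rule LeastI_ex)
        have "k0 \<noteq> 0" using ne T0 nzf by auto
        then obtain j where j: "k0 = Suc j" using not0_implies_Suc by blast
        have Tj: "T_set V E A j = {}" using not_less_Least[of j "\<lambda>k. T_set V E A k \<noteq> {}"]
          unfolding k0_def[symmetric] j by auto
        obtain W where W: "W \<in> set_pmf (prob_dist V E A j)" using set_pmf_not_empty by fast
        have WV: "W \<subseteq> V" using dist_subset[OF assms(4) W] .
        obtain W' where W': "W' \<in> set_pmf (prob_step V E W)" "zf_reach V E W W'"
          using step_exists[of E, OF irr fin WV] by blast
        have W'in: "W' \<in> set_pmf (prob_dist V E A k0)" using W W' unfolding j dist_Suc by blast
        have "W' \<in> T_set V E A k0"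
        proof -
          have "AE x in measure_pmf (prob_dist V E A k0). x \<in> T_set V E A k0"
            using Pk by (subst (asm) measure_pmf.prob_eq_1) auto
          then show ?thesis using W'in by (simp add: AE_measure_pmf_iff)
        qed
        then obtain S where S: "S \<subseteq> W'" "zero_forcing_set V E S" unfolding T_set_def by auto
        have W'V: "W' \<subseteq> V" using dist_subset[OF assms(4) W'in] .
        have "zero_forcing_set V E W'" using zf_superset[OF S(2) S(1) W'V] .
        then have "zf_reach V E W V" using zf_trans W'(2) unfolding zero_forcing_set_def by blast
        then have "zero_forcing_set V E W" using WV unfolding zero_forcing_set_def by simp
        then have "W \<in> T_set V E A j" using W unfolding T_set_def by auto
        then show False using Tj by simp
      qed
    qed
  qed
qed

end
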